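(* Let $L$ be a matroid on a finite set $S\cup T$ with $S\cap T=\emptyset$. Then $L = L|S\mathbin{\Box} L/S$ (where $L|S$ is the restriction of $L$ to $S$ and $L/S$ is the contraction of $S$, a matroid on $T$) if and only if $S$ is a free separator of $L$.
   Context: For a matroid $M$ on a finite set $S$ write $\rho_M$ for its rank function, $\rho(M)=\rho_M(S)$, $\nu_M(A)=|A|-\rho_M(A)$ and $\lambda_M(A)=\rho(M)-\rho_M(A)$. For matroids $M$ on $S$ and $N$ on $T$ with $S\cap T=\emptyset$, the free product $M\mathbin{\Box} N$ is the matroid on $S\cup T$ whose independent sets are those $A\subseteq S\cup T$ such that $A\cap S$ is independent in $M$ and $\lambda_M(A\cap S)\geq \nu_N(A\cap T)$. A cyclic flat of a matroid is a flat that is a union of circuits. A subset $A$ of the ground set of a matroid $M$ is a free separator of $M$ if every cyclic flat of $M$ is comparable to $A$ by inclusion. *)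

theory Defs
  imports Main
begin

definition matroid :: "'a set \<Rightarrow> ('a set \<Rightarrow> bool) \<Rightarrow> bool" where
  "matroid E I \<longleftrightarrow> finite E \<and> (\<forall>X. I X \<longrightarrow> X \<subseteq> E) \<and> I {} \<and>
     (\<forall>X Y. I X \<and> Y \<subseteq> X \<longrightarrow> I Y) \<and>
     (\<forall>X Y. I X \<and> I Y \<and> card X < card Y \<longrightarrow> (\<exists>y\<in>Y - X. I (insert y X)))"

definition rk :: "('a set \<Rightarrow> bool) \<Rightarrow> 'a set \<Rightarrow> nat" where
  "rk I A = Max (card ` {X. X \<subseteq> A \<and> I X})"

definition restr :: "('a set \<Rightarrow> bool) \<Rightarrow> 'a set \<Rightarrow> 'a set \<Rightarrow> bool" where
  "restr I S X \<longleftrightarrow> I X \<and> X \<subseteq> S"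

definition contr :: "('a set \<Rightarrow> bool) \<Rightarrow> 'a set \<Rightarrow> 'a set \<Rightarrow> 'a set \<Rightarrow> bool" where
  "contr I S T X \<longleftrightarrow> X \<subseteq> T \<and> rk I (X \<union> S) = card X + rk I S"

text \<open>Free product of M (on S) and N (on T):
  A independent iff A \<inter> S independent in M and
  lambda_M(A \<inter> S) \<ge> nu_N(A \<inter> T).\<close>
definition free_product ::
  "'a set \<Rightarrow> ('a set \<Rightarrow> bool) \<Rightarrow> 'a set \<Rightarrow> ('a set \<Rightarrow> bool) \<Rightarrow> 'a set \<Rightarrow> bool" where
  "free_product S M T N A \<longleftrightarrow> A \<subseteq> S \<union> T \<and> M (A \<inter> S) \<and>
     int (rk M S) - int (rk M (A \<inter> S)) \<ge> int (card (A \<inter> T)) - int (rk N (A \<inter> T))"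

definition circuit :: "'a set \<Rightarrow> ('a set \<Rightarrow> bool) \<Rightarrow> 'a set \<Rightarrow> bool" where
  "circuit E I C \<longleftrightarrow> C \<subseteq> E \<and> \<not> I C \<and> (\<forall>D. D \<subset> C \<longrightarrow> I D)"

definition flat :: "'a set \<Rightarrow> ('a set \<Rightarrow> bool) \<Rightarrow> 'a set \<Rightarrow> bool" where
  "flat E I F \<longleftrightarrow> F \<subseteq> E \<and> (\<forall>x\<in>E - F. rk I (insert x F) > rk I F)"

definition cyclic_flat :: "'a set \<Rightarrow> ('a set \<Rightarrow> bool) \<Rightarrow> 'a set \<Rightarrow> bool" where
  "cyclic_flat E I F \<longleftrightarrow> flat E I F \<and> F = \<Union>{C. circuit E I C \<and> C \<subseteq> F}"

definition free_separator :: "'a set \<Rightarrow> ('a set \<Rightarrow> bool) \<Rightarrow> 'a set \<Rightarrow> bool" where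
  "free_separator E I A \<longleftrightarrow> A \<subseteq> E \<and> (\<forall>F. cyclic_flat E I F \<longrightarrow> F \<subseteq> A \<or> A \<subseteq> F)"

end

theory Submission
  imports Defs
begin

lemma rk_eqI:
  assumes "\<And>X. X \<subseteq> A \<Longrightarrow> J X \<Longrightarrow> card X \<le> n" "X0 \<subseteq> A" "J X0" "card X0 = n"
  shows "rk J A = n"
  unfolding rk_def
proof -
  have fin: "finite (card ` {X. X \<subseteq> A \<and> J X})"
    by (rule finite_subset[of _ "{..n}"]) (use assms(1) in auto)
  have ne: "card ` {X. X \<subseteq> A \<and> J X} \<noteq> {}" using assms by auto
  have "Max (card ` {X. X \<subseteq> A \<and> J X}) \<le> n" using fin ne assms(1) by (subst Max_le_iff) auto
  moreover have "n \<le> Max (card ` {X. X \<subseteq> A \<and> J X})" using fin assms(2-4) by (intro Max_ge) auto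
  ultimately show "Max (card ` {X. X \<subseteq> A \<and> J X}) = n" by simp
qed

locale mat =
  fixes E :: "'a set" and I :: "'a set \<Rightarrow> bool"
  assumes m: "matroid E I"
begin

lemma finE: "finite E" using m unfolding matroid_def by blast
lemma indE: "I X \<Longrightarrow> X \<subseteq> E" using m unfolding matroid_def by blast
lemma ind_empty: "I {}" using m unfolding matroid_def by blast
lemma ind_sub: "I X \<Longrightarrow> Y \<subseteq> X \<Longrightarrow> I Y" using m unfolding matroid_def by blast
lemma ind_aug: "I X \<Longrightarrow> I Y \<Longrightarrow> card X < card Y \<Longrightarrow> \<exists>y\<in>Y - X. I (insert y X)"
  using m unfolding matroid_def by blast
lemma ind_fin: "I X \<Longrightarrow> finite X" using indE finE finite_subset by blast

lemma card_ins: "I K \<Longrightarrow> x \<notin> K \<Longrightarrow> card (insert x K) = card K + 1"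
  using ind_fin by simp

lemma fam_fin: "finite (card ` {X. X \<subseteq> A \<and> I X})"
proof -
  have "{X. X \<subseteq> A \<and> I X} \<subseteq> Pow E" using indE by blast
  then show ?thesis using finE by (meson finite_Pow_iff finite_imageI finite_subset)
qed

lemma rk_ge: "X \<subseteq> A \<Longrightarrow> I X \<Longrightarrow> card X \<le> rk I A"
  unfolding rk_def using fam_fin by (intro Max_ge) auto

lemma rk_basis: "\<exists>X. X \<subseteq> A \<and> I X \<and> card X = rk I A"
proof -
  have "rk I A \<in> card ` {X. X \<subseteq> A \<and> I X}"
    unfolding rk_def using fam_fin ind_empty by (intro Max_in) auto
  then show ?thesis by auto
qed

lemma rk_mono: "A \<subseteq> B \<Longrightarrow> rk I A \<le> rk I B"
proof -
  assume "A \<subseteq> B"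
  obtain X where "X \<subseteq> A" "I X" "card X = rk I A" using rk_basis by blast
  then show ?thesis using rk_ge[of X B] \<open>A \<subseteq> B\<close> by auto
qed

lemma rk_le_card: "finite A \<Longrightarrow> rk I A \<le> card A"
  using rk_basis[of A] card_mono by metis

lemma rk_ind: "I A \<Longrightarrow> rk I A = card A"
  using rk_ge[of A A] rk_le_card ind_fin by force

lemma rk_card_ind: "finite A \<Longrightarrow> rk I A = card A \<Longrightarrow> I A"
proof -
  assume a: "finite A" "rk I A = card A"
  obtain X where "X \<subseteq> A" "I X" "card X = rk I A" using rk_basis by blast
  then have "X = A" using a card_subset_eq by metis
  then show ?thesis using \<open>I X\<close> by simp
qed

lemma extend: "I J \<Longrightarrow> J \<subseteq> A \<Longrightarrow> \<exists>K. J \<subseteq> K \<and> K \<subseteq> A \<and> I K \<and> card K = rk I A"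
proof (induction "rk I A - card J" arbitrary: J rule: less_induct)
  case less
  show ?case
  proof (cases "card J < rk I A")
    case False
    with rk_ge[OF less.prems(2,1)] show ?thesis using less.prems by (intro exI[of _ J]) auto
  next
    case True
    obtain B where B: "B \<subseteq> A" "I B" "card B = rk I A" using rk_basis by blast
    then obtain y where y: "y \<in> B - J" "I (insert y J)" using ind_aug[OF less.prems(1) B(2)] True by auto
    have c: "card (insert y J) = card J + 1" using y ind_fin[OF less.prems(1)] by simp
    have "rk I A - card (insert y J) < rk I A - card J" using c True by simp
    from less.hyps[OF this y(2)] y B less.prems obtain K where
      "insert y J \<subseteq> K" "K \<subseteq> A" "I K" "card K = rk I A" by blast
    then show ?thesis by blast
  qed
qed

lemma aug_basis:
  assumes "K \<subseteq> A" "I K" "card K = rk I A" "A \<subseteq> A'" "rk I A < rk I A'"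
  shows "\<exists>y\<in>A' - A. I (insert y K)"
proof -
  obtain B where B: "B \<subseteq> A'" "I B" "card B = rk I A'" using rk_basis by blast
  obtain y where y: "y \<in> B - K" "I (insert y K)" using ind_aug[OF assms(2) B(2)] assms B by auto
  have "y \<notin> A"
  proof
    assume "y \<in> A"
    then have "card (insert y K) \<le> rk I A" using rk_ge y assms by auto
    moreover have "card (insert y K) = card K + 1" using y ind_fin[OF assms(2)] by simp
    ultimately show False using assms by simp
  qed
  then show ?thesis using y B by auto
qed

lemma cl_rank:
  assumes "\<forall>z\<in>Z. rk I (insert z A) = rk I A"
  shows "rk I (A \<union> Z) = rk I A"
proof (rule ccontr)
  assume "rk I (A \<union> Z) \<noteq> rk I A"
  then have lt: "rk I A < rk I (A \<union> Z)" using rk_mono[of A "A \<union> Z"] by auto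
  obtain K where K: "K \<subseteq> A" "I K" "card K = rk I A" using rk_basis by blast
  obtain y where y: "y \<in> Z" "y \<notin> A" "I (insert y K)" using aug_basis[OF K _ lt] by auto
  have "card (insert y K) \<le> rk I (insert y A)" using K y by (intro rk_ge) auto
  moreover have "card (insert y K) = card K + 1"
  proof -
    have "y \<notin> K" using y K by auto
    then show ?thesis using ind_fin[OF K(2)] by simp
  qed
  ultimately show False using assms y K by auto
qed

lemma rk_subadd: "finite Z \<Longrightarrow> rk I (A \<union> Z) \<le> rk I A + card Z"
proof -
  assume fZ: "finite Z"
  obtain K where K: "K \<subseteq> A \<union> Z" "I K" "card K = rk I (A \<union> Z)" using rk_basis by blast
  have 1: "card (K \<inter> A) \<le> rk I A" using K ind_sub by (intro rk_ge) auto
  have 2: "card (K - A) \<le> card Z" using K fZ by (intro card_mono) auto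
  have "card K = card (K \<inter> A) + card (K - A)" using ind_fin[OF K(2)]
    by (metis Int_Diff_disjoint Int_Diff_Un card_Un_disjoint finite_Diff finite_Int)
  then show ?thesis using 1 2 K by linarith
qed

lemma dep_circuit: "X \<subseteq> E \<Longrightarrow> \<not> I X \<Longrightarrow> \<exists>C. C \<subseteq> X \<and> circuit E I C"
proof (induction "card X" arbitrary: X rule: less_induct)
  case less
  show ?case
  proof (cases "\<forall>D. D \<subset> X \<longrightarrow> I D")
    case True then show ?thesis using less.prems unfolding circuit_def by blast
  next
    case False
    then obtain D where D: "D \<subset> X" "\<not> I D" by blast
    have "card D < card X" using D finE less.prems by (meson psubset_card_mono finite_subset)
    from less.hyps[OF this _ D(2)] D less.prems obtain C where "C \<subseteq> D" "circuit E I C" by blast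
    then show ?thesis using D by blast
  qed
qed

lemma circuit_rk:
  assumes "circuit E I C" shows "rk I C + 1 = card C"
proof -
  have CE: "C \<subseteq> E" and nI: "\<not> I C" and sub: "\<forall>D. D \<subset> C \<longrightarrow> I D"
    using assms unfolding circuit_def by auto
  have fC: "finite C" using CE finE finite_subset by blast
  have "C \<noteq> {}" using nI ind_empty by auto
  then obtain c where c: "c \<in> C" by auto
  have "I (C - {c})" using sub c by auto
  then have "card (C - {c}) \<le> rk I C" by (intro rk_ge) auto
  moreover have "rk I C \<noteq> card C" using rk_card_ind fC nI by blast
  moreover have "rk I C \<le> card C" using rk_le_card fC by blast
  ultimately show ?thesis using c fC by (simp add: card_Diff_singleton)
qed

lemma cl_cyclic_flat:
  assumes C: "circuit E I C"
  defines "F \<equiv> {x\<in>E. rk I (insert x C) = rk I C}"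
  shows "cyclic_flat E I F" "C \<subseteq> F"
proof -
  have CE: "C \<subseteq> E" using C unfolding circuit_def by auto
  show CF: "C \<subseteq> F" unfolding F_def using CE by (auto simp: insert_absorb)
  have "\<forall>z\<in>F. rk I (insert z C) = rk I C" unfolding F_def by auto
  then have rF: "rk I F = rk I C"
    using cl_rank[of F C] CF by (simp add: Un_absorb1)
  have fl: "flat E I F"
    unfolding flat_def
  proof (intro conjI ballI)
    show "F \<subseteq> E" unfolding F_def by auto
    fix x assume x: "x \<in> E - F"
    then have "rk I (insert x C) \<noteq> rk I C" unfolding F_def by auto
    then have "rk I C < rk I (insert x C)" using rk_mono[of C "insert x C"] by force
    also have "\<dots> \<le> rk I (insert x F)" using CF by (intro rk_mono) auto
    finally show "rk I F < rk I (insert x F)" using rF by simp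
  qed
  have "F \<subseteq> \<Union>{D. circuit E I D \<and> D \<subseteq> F}"
  proof
    fix x assume xF: "x \<in> F"
    show "x \<in> \<Union>{D. circuit E I D \<and> D \<subseteq> F}"
    proof (cases "x \<in> C")
      case True then show ?thesis using C CF by blast
    next
      case False
      obtain B where B: "B \<subseteq> C" "I B" "card B = rk I C" using rk_basis by blast
      have "\<not> I (insert x B)"
      proof
        assume "I (insert x B)"
        then have "card (insert x B) \<le> rk I (insert x C)" using B by (intro rk_ge) auto
        moreover have "card (insert x B) = card B + 1" using False B by (intro card_ins) auto
        ultimately show False using xF B unfolding F_def by auto
      qed
      moreover have "insert x B \<subseteq> E" using xF B CE unfolding F_def by auto
      ultimately obtain D where D: "D \<subseteq> insert x B" "circuit E I D" using dep_circuit by blast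
      have "x \<in> D"
      proof (rule ccontr)
        assume "x \<notin> D"
        then have "D \<subseteq> B" using D by auto
        then have "I D" using B ind_sub by blast
        then show False using D unfolding circuit_def by blast
      qed
      moreover have "D \<subseteq> F" using D B CF xF by auto
      ultimately show ?thesis using D by blast
    qed
  qed
  then have eqF: "F = \<Union>{D. circuit E I D \<and> D \<subseteq> F}" by blast
  show "cyclic_flat E I F" unfolding cyclic_flat_def using fl eqF by (rule conjI)
qed

lemma flat_cl:
  assumes fl: "flat E I F" and CF: "C \<subseteq> F" and sE: "s \<in> E" and r: "rk I (insert s C) = rk I C"
  shows "s \<in> F"
proof (rule ccontr)
  assume sF: "s \<notin> F"
  have "\<forall>x\<in>E - F. rk I F < rk I (insert x F)" using fl unfolding flat_def by blast
  then have lt: "rk I F < rk I (insert s F)" using sE sF by blast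
  obtain B where B: "B \<subseteq> C" "I B" "card B = rk I C" using rk_basis by blast
  have BF: "B \<subseteq> F" using B(1) CF by (rule subset_trans)
  obtain K where K: "B \<subseteq> K" "K \<subseteq> F" "I K" "card K = rk I F"
    using extend[OF B(2) BF] by blast
  have FF: "F \<subseteq> insert s F" by blast
  obtain y where y: "y \<in> insert s F - F" "I (insert y K)" using aug_basis[OF K(2-4) FF lt] by blast
  then have "y = s" by blast
  then have "I (insert s K)" using y by simp
  moreover have "insert s B \<subseteq> insert s K" using K(1) by blast
  ultimately have IsB: "I (insert s B)" by (rule ind_sub)
  have sB: "s \<notin> B" using sF BF by blast
  have "card (insert s B) \<le> rk I (insert s C)" using B(1) IsB by (intro rk_ge) blast+
  moreover have "card (insert s B) = card B + 1" using card_ins[OF B(2) sB] .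
  ultimately show False using r B(3) by linarith
qed

end

theorem theorem6p3:
  fixes S T :: "'a set" and L :: "'a set \<Rightarrow> bool"
  assumes "matroid (S \<union> T) L" and "S \<inter> T = {}"
  shows "L = free_product S (restr L S) T (contr L S T) \<longleftrightarrow> free_separator (S \<union> T) L S"
proof -
  interpret mat "S \<union> T" L by (rule mat.intro) (rule assms(1))
  have disj: "S \<inter> T = {}" by (rule assms(2))
  have rkM: "rk (restr L S) B = rk L B" if "B \<subseteq> S" for B
  proof -
    obtain X where X: "X \<subseteq> B" "L X" "card X = rk L B" using rk_basis by blast
    show ?thesis
    proof (rule rk_eqI[of B "restr L S" _ X])
      show "\<And>Y. Y \<subseteq> B \<Longrightarrow> restr L S Y \<Longrightarrow> card Y \<le> rk L B" unfolding restr_def using rk_ge by blast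
    qed (use X that in \<open>auto simp: restr_def\<close>)
  qed
  have rkN: "rk (contr L S T) Y + rk L S = rk L (Y \<union> S)" if Y: "Y \<subseteq> T" for Y
  proof -
    obtain B where B: "B \<subseteq> S" "L B" "card B = rk L S" using rk_basis by blast
    have BYS: "B \<subseteq> Y \<union> S" using B(1) by blast
    obtain K where K: "B \<subseteq> K" "K \<subseteq> Y \<union> S" "L K" "card K = rk L (Y \<union> S)"
      using extend[OF B(2) BYS] by blast
    have fK: "finite K" using K(3) by (rule ind_fin)
    have KSi: "L (K \<inter> S)" using K(3) by (rule ind_sub) blast
    have "card (K \<inter> S) \<le> rk L S" using KSi by (intro rk_ge) blast+
    then have cKS: "card (K \<inter> S) \<le> card B" using B(3) by simp
    have BKS: "B \<subseteq> K \<inter> S" using B(1) K(1) by blast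
    have fKS: "finite (K \<inter> S)" using fK by simp
    have KS: "B = K \<inter> S" using card_seteq[OF fKS BKS cKS] .
    define X where "X = K - B"
    have XY: "X \<subseteq> Y" using K(2) KS unfolding X_def by blast
    have KX: "K = X \<union> B" using K(1) unfolding X_def by blast
    have XB: "X \<inter> B = {}" unfolding X_def by blast
    have fX: "finite X" unfolding X_def using fK by simp
    have fB: "finite B" using fK K(1) by (rule finite_subset[rotated])
    have cX: "card X + card B = card K" using card_Un_disjoint[OF fX fB XB] KX by simp
    have rX: "rk L (X \<union> S) = card X + rk L S"
    proof (rule antisym)
      have "rk L (X \<union> S) \<le> rk L (Y \<union> S)" using XY by (intro rk_mono) auto
      then show "rk L (X \<union> S) \<le> card X + rk L S" using K cX B by simp
      have "card K \<le> rk L (X \<union> S)" using K KS by (intro rk_ge) (auto simp: X_def)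
      then show "card X + rk L S \<le> rk L (X \<union> S)" using cX B by simp
    qed
    have "rk (contr L S T) Y = rk L (Y \<union> S) - rk L S"
    proof (rule rk_eqI[of Y _ _ X])
      fix Z assume Z: "Z \<subseteq> Y" "contr L S T Z"
      then have "rk L (Z \<union> S) = card Z + rk L S" unfolding contr_def by simp
      moreover have "rk L (Z \<union> S) \<le> rk L (Y \<union> S)" using Z by (intro rk_mono) auto
      ultimately show "card Z \<le> rk L (Y \<union> S) - rk L S" by simp
    next
      show "X \<subseteq> Y" by fact
    next
      show "contr L S T X" unfolding contr_def using XY Y rX by auto
    next
      show "card X = rk L (Y \<union> S) - rk L S" using cX K B by simp
    qed
    moreover have "rk L S \<le> rk L (Y \<union> S)" by (intro rk_mono) auto
    ultimately show ?thesis by simp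
  qed
  have FP: "free_product S (restr L S) T (contr L S T) A \<longleftrightarrow>
      A \<subseteq> S \<union> T \<and> L (A \<inter> S) \<and> card A \<le> rk L (S \<union> (A \<inter> T))" for A
  proof (cases "A \<subseteq> S \<union> T \<and> L (A \<inter> S)")
    case False then show ?thesis unfolding free_product_def restr_def by auto
  next
    case True
    have fA: "finite A" using True finE finite_subset by blast
    have "card ((A \<inter> S) \<union> (A \<inter> T)) = card (A \<inter> S) + card (A \<inter> T)"
      by (rule card_Un_disjoint) (use fA disj in auto)
    moreover have "(A \<inter> S) \<union> (A \<inter> T) = A" using True by auto
    ultimately have cA: "card A = card (A \<inter> S) + card (A \<inter> T)" by simp
    have 1: "rk (restr L S) S = rk L S" by (rule rkM) simp
    have 2: "rk (restr L S) (A \<inter> S) = card (A \<inter> S)" using rkM[of "A \<inter> S"] rk_ind True by simp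
    have 3: "rk (contr L S T) (A \<inter> T) + rk L S = rk L (S \<union> (A \<inter> T))"
      using rkN[of "A \<inter> T"] by (simp add: Un_commute)
    have 4: "restr L S (A \<inter> S)" using True unfolding restr_def by auto
    have "int (rk (restr L S) S) - int (rk (restr L S) (A \<inter> S)) \<ge>
          int (card (A \<inter> T)) - int (rk (contr L S T) (A \<inter> T)) \<longleftrightarrow> card A \<le> rk L (S \<union> (A \<inter> T))"
      unfolding 1 2 using 3 cA by linarith
    then show ?thesis unfolding free_product_def using True 4 by auto
  qed
  have LFP: "free_product S (restr L S) T (contr L S T) A" if LA: "L A" for A
  proof -
    have AE: "A \<subseteq> S \<union> T" using indE LA by blast
    have "L (A \<inter> S)" using ind_sub LA by blast
    moreover have "card A \<le> rk L (S \<union> (A \<inter> T))"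
      using rk_ind[OF LA] rk_mono[of A "S \<union> (A \<inter> T)"] AE by auto
    ultimately show ?thesis using FP AE by blast
  qed
  show ?thesis
  proof
    assume eq: "L = free_product S (restr L S) T (contr L S T)"
    have CC: "rk L (insert s C) = rk L C" if C: "circuit (S \<union> T) L C" "\<not> C \<subseteq> S" and s: "s \<in> S" for C s
    proof (rule ccontr)
      assume "rk L (insert s C) \<noteq> rk L C"
      then have "rk L C < rk L (insert s C)" using rk_mono[of C "insert s C"] by force
      then have "card C \<le> rk L (insert s C)" using circuit_rk[OF C(1)] by simp
      also have "\<dots> \<le> rk L (S \<union> (C \<inter> T))" using C s unfolding circuit_def by (intro rk_mono) auto
      finally have c: "card C \<le> rk L (S \<union> (C \<inter> T))" .
      have CE: "C \<subseteq> S \<union> T" using C unfolding circuit_def by auto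
      have "C \<inter> S \<subset> C" using C(2) by blast
      then have "L (C \<inter> S)" using C(1) unfolding circuit_def by blast
      then have "free_product S (restr L S) T (contr L S T) C" using FP c CE by blast
      moreover have "L C = free_product S (restr L S) T (contr L S T) C" using eq by (rule fun_cong)
      ultimately have "L C" by simp
      then show False using C unfolding circuit_def by blast
    qed
    show "free_separator (S \<union> T) L S" unfolding free_separator_def
    proof (intro conjI allI impI)
      show "S \<subseteq> S \<union> T" by blast
      fix F assume F: "cyclic_flat (S \<union> T) L F"
      show "F \<subseteq> S \<or> S \<subseteq> F"
      proof (cases "F \<subseteq> S")
        case False
        then obtain x where x: "x \<in> F" "x \<notin> S" by blast
        then obtain C where C: "circuit (S \<union> T) L C" "C \<subseteq> F" "x \<in> C"
          using F unfolding cyclic_flat_def by blast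
        have fl: "flat (S \<union> T) L F" using F unfolding cyclic_flat_def by blast
        have "S \<subseteq> F"
        proof
          fix s assume s: "s \<in> S"
          have "\<not> C \<subseteq> S" using x C by blast
          then show "s \<in> F" using flat_cl[OF fl C(2)] CC[OF C(1) _ s] s by blast
        qed
        then show ?thesis by blast
      qed blast
    qed
  next
    assume FS: "free_separator (S \<union> T) L S"
    show "L = free_product S (restr L S) T (contr L S T)"
    proof (rule ext, rule iffI)
      fix A assume "L A" then show "free_product S (restr L S) T (contr L S T) A" by (rule LFP)
    next
      fix A assume A: "free_product S (restr L S) T (contr L S T) A"
      show "L A"
      proof (rule ccontr)
        assume nA: "\<not> L A"
        have AE: "A \<subseteq> S \<union> T" and AS: "L (A \<inter> S)" and cA: "card A \<le> rk L (S \<union> (A \<inter> T))"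
          using A FP by auto
        obtain C where C: "C \<subseteq> A" "circuit (S \<union> T) L C" using dep_circuit[OF AE nA] by blast
        have nCS: "\<not> C \<subseteq> S"
        proof
          assume "C \<subseteq> S"
          then have "C \<subseteq> A \<inter> S" using C(1) by blast
          then have "L C" using AS ind_sub by blast
          then show False using C(2) unfolding circuit_def by blast
        qed
        define F where "F = {x \<in> S \<union> T. rk L (insert x C) = rk L C}"
        have cf: "cyclic_flat (S \<union> T) L F" "C \<subseteq> F"
          using cl_cyclic_flat[OF C(2)] unfolding F_def by auto
        have "S \<subseteq> F" using FS cf nCS unfolding free_separator_def by blast
        then have "\<forall>z\<in>S. rk L (insert z C) = rk L C" unfolding F_def by auto
        then have rSC: "rk L (C \<union> S) = rk L C" by (rule cl_rank)
        have fA: "finite A" using AE finE finite_subset by blast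
        have "rk L (S \<union> (A \<inter> T)) \<le> rk L ((C \<union> S) \<union> (A \<inter> T - C))" by (intro rk_mono) auto
        also have "\<dots> \<le> rk L (C \<union> S) + card (A \<inter> T - C)" using fA by (intro rk_subadd) auto
        finally have 1: "card A \<le> rk L C + card (A \<inter> T - C)" using cA rSC by simp
        have "card (C \<union> (A \<inter> T - C)) = card C + card (A \<inter> T - C)"
          using fA C(1) by (intro card_Un_disjoint) (auto intro: finite_subset)
        moreover have "card (C \<union> (A \<inter> T - C)) \<le> card A" using fA C(1) by (intro card_mono) auto
        ultimately show False using 1 circuit_rk[OF C(2)] by simp
      qed
    qed
  qed
qed

end
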